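(* Let $\mathbf{K} = (\mathcal{K}, U, U_0)$ be a construction category and let $D: I \to \mathcal{K}$ be a directed diagram with maps $d_{ij}: D_i \to D_j$ ($i \le j$). Then: (1) If $D$ is full, then for any cocone $(f_i : D_i \to A)_{i \in I}$ for $D$ and any $i \in I$, we have $f_i^{-1}[U_0 A] \cap U D_i \subseteq \bigcup_{j \ge i} d_{ij}^{-1}[U_0 D_j]$. (2) An object $A$ is full if and only if for every morphism $f: A \to B$, $U A \cap f^{-1}[U_0 B] = U_0 A$. (3) If $D$ is full and $(f_i : D_i \to A)_{i \in I}$ is a cocone for $D$, then $A$ is full for $\bigcup_{i \in I} f_i[U D_i]$. In particular, if $U A = \bigcup_{i \in I} f_i[U D_i]$, then $A$ is full.
   Context: A construction category is a triple $\mathbf{K} = (\mathcal{K}, U, U_0)$ where $\mathcal{K}$ is a category, $U: \mathcal{K} \to \mathbf{Set}$ is a faithful functor, and $U_0 : \mathcal{K} \to \mathbf{Set}$ is a faithful subfunctor of $U$: for every morphism $f: A \to B$, $U_0 A \subseteq U A$ and $U_0 f = (U f)\upharpoonright U_0 A$. For a morphism $f$ and an element $x$, $f(x)$ denotes $(Uf)(x)$, and preimages/images under $f$ are taken under $Uf$. Given an object $A$ and $x \in UA$: $x$ is constructed by stage $A$ if $x \in U_0 A$; $x$ is constructible from $A$ if there is a morphism $f: A \to B$ with $f(x) \in U_0 B$. A directed diagram $D: I \to \mathcal{K}$ (indexed by a directed poset $I$) with maps $d_{ij}$ is full if for every $i \in I$ and $x \in U D_i$: if $d_{ij}(x)$ is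 constructible from $D_j$ for all $j \ge i$, then there exists $j \ge i$ such that $d_{ij}(x)$ is constructed by stage $D_j$. For an object $A$ and $X \subseteq UA$, $A$ is full for $X$ if every $x \in X$ constructible from $A$ is constructed by stage $A$; $A$ is full if it is full for $UA$. *)

theory Defs
  imports Main
begin

record ('o, 'm) cat =
  Ob   :: "'o set"
  Mor  :: "'m set"
  Dom  :: "'m \<Rightarrow> 'o"
  Cod  :: "'m \<Rightarrow> 'o"
  Id   :: "'o \<Rightarrow> 'm"
  Comp :: "'m \<Rightarrow> 'm \<Rightarrow> 'm"   (* Comp g f = g \<circ> f *)

definition category :: "('o, 'm, 'x) cat_scheme \<Rightarrow> bool" where
  "category C \<longleftrightarrow>
     (\<forall>f\<in>Mor C. Dom C f \<in> Ob C \<and> Cod C f \<in> Ob C) \<and>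
     (\<forall>a\<in>Ob C. Id C a \<in> Mor C \<and> Dom C (Id C a) = a \<and> Cod C (Id C a) = a) \<and>
     (\<forall>f\<in>Mor C. \<forall>g\<in>Mor C. Cod C f = Dom C g \<longrightarrow>
        Comp C g f \<in> Mor C \<and> Dom C (Comp C g f) = Dom C f \<and> Cod C (Comp C g f) = Cod C g) \<and>
     (\<forall>f\<in>Mor C. Comp C f (Id C (Dom C f)) = f \<and> Comp C (Id C (Cod C f)) f = f) \<and>
     (\<forall>f\<in>Mor C. \<forall>g\<in>Mor C. \<forall>h\<in>Mor C. Cod C f = Dom C g \<longrightarrow> Cod C g = Dom C h \<longrightarrow>
        Comp C h (Comp C g f) = Comp C (Comp C h g) f)"

text \<open>The functor U to Set is given by an object part Uo (sets of elements of a fixed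
  universe type 'e) and a morphism part Umor; the subfunctor U0 only needs an object
  part since its morphism part is the restriction of Umor.\<close>

record ('o, 'm, 'e) ccat = "('o, 'm) cat" +
  Uo   :: "'o \<Rightarrow> 'e set"
  Umor :: "'m \<Rightarrow> 'e \<Rightarrow> 'e"
  U0   :: "'o \<Rightarrow> 'e set"

definition set_functor :: "('o, 'm, 'x) cat_scheme \<Rightarrow> ('o \<Rightarrow> 'e set) \<Rightarrow> ('m \<Rightarrow> 'e \<Rightarrow> 'e) \<Rightarrow> bool" where
  "set_functor C F Fm \<longleftrightarrow>
     (\<forall>f\<in>Mor C. Fm f ` F (Dom C f) \<subseteq> F (Cod C f)) \<and>
     (\<forall>a\<in>Ob C. \<forall>x\<in>F a. Fm (Id C a) x = x) \<and>
     (\<forall>f\<in>Mor C. \<forall>g\<in>Mor C. Cod C f = Dom C g \<longrightarrow>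
        (\<forall>x\<in>F (Dom C f). Fm (Comp C g f) x = Fm g (Fm f x)))"

definition faithful_on :: "('o, 'm, 'x) cat_scheme \<Rightarrow> ('o \<Rightarrow> 'e set) \<Rightarrow> ('m \<Rightarrow> 'e \<Rightarrow> 'e) \<Rightarrow> bool" where
  "faithful_on C F Fm \<longleftrightarrow>
     (\<forall>f\<in>Mor C. \<forall>g\<in>Mor C. Dom C f = Dom C g \<longrightarrow> Cod C f = Cod C g \<longrightarrow>
        (\<forall>x\<in>F (Dom C f). Fm f x = Fm g x) \<longrightarrow> f = g)"

definition construction_category :: "('o, 'm, 'e) ccat \<Rightarrow> bool" where
  "construction_category K \<longleftrightarrow>
     category K \<and>
     set_functor K (Uo K) (Umor K) \<and> faithful_on K (Uo K) (Umor K) \<and>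
     (\<forall>a\<in>Ob K. U0 K a \<subseteq> Uo K a) \<and>
     set_functor K (U0 K) (Umor K) \<and> faithful_on K (U0 K) (Umor K)"

definition constructed_by :: "('o, 'm, 'e) ccat \<Rightarrow> 'o \<Rightarrow> 'e \<Rightarrow> bool" where
  "constructed_by K A x \<longleftrightarrow> x \<in> U0 K A"

definition constructible_from :: "('o, 'm, 'e) ccat \<Rightarrow> 'o \<Rightarrow> 'e \<Rightarrow> bool" where
  "constructible_from K A x \<longleftrightarrow> x \<in> Uo K A \<and>
     (\<exists>f\<in>Mor K. Dom K f = A \<and> Umor K f x \<in> U0 K (Cod K f))"

definition full_for :: "('o, 'm, 'e) ccat \<Rightarrow> 'o \<Rightarrow> 'e set \<Rightarrow> bool" where
  "full_for K A X \<longleftrightarrow> (\<forall>x\<in>X. constructible_from K A x \<longrightarrow> constructed_by K A x)"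

definition full_obj :: "('o, 'm, 'e) ccat \<Rightarrow> 'o \<Rightarrow> bool" where
  "full_obj K A \<longleftrightarrow> full_for K A (Uo K A)"

definition directed_poset :: "'i set \<Rightarrow> ('i \<Rightarrow> 'i \<Rightarrow> bool) \<Rightarrow> bool" where
  "directed_poset I le \<longleftrightarrow> I \<noteq> {} \<and>
     (\<forall>i\<in>I. le i i) \<and>
     (\<forall>i\<in>I. \<forall>j\<in>I. le i j \<longrightarrow> le j i \<longrightarrow> i = j) \<and>
     (\<forall>i\<in>I. \<forall>j\<in>I. \<forall>k\<in>I. le i j \<longrightarrow> le j k \<longrightarrow> le i k) \<and>
     (\<forall>i\<in>I. \<forall>j\<in>I. \<exists>k\<in>I. le i k \<and> le j k)"

definition directed_diagram ::
  "('o, 'm, 'e) ccat \<Rightarrow> 'i set \<Rightarrow> ('i \<Rightarrow> 'i \<Rightarrow> bool) \<Rightarrow> ('i \<Rightarrow> 'o) \<Rightarrow> ('i \<Rightarrow> 'i \<Rightarrow> 'm) \<Rightarrow> bool" where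
  "directed_diagram K I le D d \<longleftrightarrow>
     directed_poset I le \<and>
     (\<forall>i\<in>I. D i \<in> Ob K) \<and>
     (\<forall>i\<in>I. \<forall>j\<in>I. le i j \<longrightarrow> d i j \<in> Mor K \<and> Dom K (d i j) = D i \<and> Cod K (d i j) = D j) \<and>
     (\<forall>i\<in>I. d i i = Id K (D i)) \<and>
     (\<forall>i\<in>I. \<forall>j\<in>I. \<forall>k\<in>I. le i j \<longrightarrow> le j k \<longrightarrow> Comp K (d j k) (d i j) = d i k)"

definition cocone ::
  "('o, 'm, 'e) ccat \<Rightarrow> 'i set \<Rightarrow> ('i \<Rightarrow> 'i \<Rightarrow> bool) \<Rightarrow> ('i \<Rightarrow> 'o) \<Rightarrow> ('i \<Rightarrow> 'i \<Rightarrow> 'm)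
     \<Rightarrow> 'o \<Rightarrow> ('i \<Rightarrow> 'm) \<Rightarrow> bool" where
  "cocone K I le D d A f \<longleftrightarrow> A \<in> Ob K \<and>
     (\<forall>i\<in>I. f i \<in> Mor K \<and> Dom K (f i) = D i \<and> Cod K (f i) = A) \<and>
     (\<forall>i\<in>I. \<forall>j\<in>I. le i j \<longrightarrow> Comp K (f j) (d i j) = f i)"

definition full_diagram ::
  "('o, 'm, 'e) ccat \<Rightarrow> 'i set \<Rightarrow> ('i \<Rightarrow> 'i \<Rightarrow> bool) \<Rightarrow> ('i \<Rightarrow> 'o) \<Rightarrow> ('i \<Rightarrow> 'i \<Rightarrow> 'm) \<Rightarrow> bool" where
  "full_diagram K I le D d \<longleftrightarrow>
     (\<forall>i\<in>I. \<forall>x\<in>Uo K (D i).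
        (\<forall>j\<in>I. le i j \<longrightarrow> constructible_from K (D j) (Umor K (d i j) x)) \<longrightarrow>
        (\<exists>j\<in>I. le i j \<and> constructed_by K (D j) (Umor K (d i j) x)))"

end

theory Submission
  imports Defs
begin


lemma cc_parts:
  assumes "construction_category K"
  shows "category K" "set_functor K (Uo K) (Umor K)" "set_functor K (U0 K) (Umor K)"
    "\<forall>a\<in>Ob K. U0 K a \<subseteq> Uo K a"
  using assms unfolding construction_category_def by simp_all

lemma sf_map:
  assumes "set_functor C F Fm" "f \<in> Mor C" "x \<in> F (Dom C f)"
  shows "Fm f x \<in> F (Cod C f)"
proof -
  have "\<forall>f\<in>Mor C. Fm f ` F (Dom C f) \<subseteq> F (Cod C f)" using assms(1) unfolding set_functor_def by (elim conjE)
  then show ?thesis using assms(2,3) by blast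
qed

lemma sf_id:
  assumes "set_functor C F Fm" "a \<in> Ob C" "x \<in> F a"
  shows "Fm (Id C a) x = x"
proof -
  have "\<forall>a\<in>Ob C. \<forall>x\<in>F a. Fm (Id C a) x = x" using assms(1) unfolding set_functor_def by (elim conjE)
  then show ?thesis using assms(2,3) by blast
qed

lemma sf_comp:
  assumes "set_functor C F Fm" "f \<in> Mor C" "g \<in> Mor C" "Cod C f = Dom C g" "x \<in> F (Dom C f)"
  shows "Fm (Comp C g f) x = Fm g (Fm f x)"
proof -
  have "\<forall>f\<in>Mor C. \<forall>g\<in>Mor C. Cod C f = Dom C g \<longrightarrow>
        (\<forall>x\<in>F (Dom C f). Fm (Comp C g f) x = Fm g (Fm f x))" using assms(1) unfolding set_functor_def by (elim conjE)
  then show ?thesis using assms(2-5) by blast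
qed

lemma cc_U:
  assumes "construction_category K" "f \<in> Mor K" "x \<in> Uo K (Dom K f)"
  shows "Umor K f x \<in> Uo K (Cod K f)"
  using sf_map[OF cc_parts(2)[OF assms(1)] assms(2,3)] .

lemma cc_U0:
  assumes "construction_category K" "f \<in> Mor K" "x \<in> U0 K (Dom K f)"
  shows "Umor K f x \<in> U0 K (Cod K f)"
  using sf_map[OF cc_parts(3)[OF assms(1)] assms(2,3)] .

lemma cc_U0U:
  assumes "construction_category K" "a \<in> Ob K" "x \<in> U0 K a"
  shows "x \<in> Uo K a"
  using cc_parts(4)[OF assms(1)] assms(2,3) by blast

lemma cc_comp:
  assumes "construction_category K" "f \<in> Mor K" "g \<in> Mor K" "Cod K f = Dom K g" "x \<in> Uo K (Dom K f)"
  shows "Umor K (Comp K g f) x = Umor K g (Umor K f x)"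
  using sf_comp[OF cc_parts(2)[OF assms(1)] assms(2-5)] .

lemma cat_comp:
  assumes "category C" "f \<in> Mor C" "g \<in> Mor C" "Cod C f = Dom C g"
  shows "Comp C g f \<in> Mor C \<and> Dom C (Comp C g f) = Dom C f \<and> Cod C (Comp C g f) = Cod C g"
proof -
  have "\<forall>f\<in>Mor C. \<forall>g\<in>Mor C. Cod C f = Dom C g \<longrightarrow>
        Comp C g f \<in> Mor C \<and> Dom C (Comp C g f) = Dom C f \<and> Cod C (Comp C g f) = Cod C g"
    using assms(1) unfolding category_def by (elim conjE)
  then show ?thesis using assms(2-4) by blast
qed

lemma cat_id:
  assumes "category C" "a \<in> Ob C"
  shows "Id C a \<in> Mor C \<and> Dom C (Id C a) = a \<and> Cod C (Id C a) = a"
proof -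
  have "\<forall>a\<in>Ob C. Id C a \<in> Mor C \<and> Dom C (Id C a) = a \<and> Cod C (Id C a) = a"
    using assms(1) unfolding category_def by (elim conjE)
  then show ?thesis using assms(2) by blast
qed

lemma cc_compM:
  assumes "construction_category K" "f \<in> Mor K" "g \<in> Mor K" "Cod K f = Dom K g"
  shows "Comp K g f \<in> Mor K \<and> Dom K (Comp K g f) = Dom K f \<and> Cod K (Comp K g f) = Cod K g"
  using cat_comp[OF cc_parts(1)[OF assms(1)] assms(2-4)] .

theorem lemmaA5:
  fixes K :: "('o, 'm, 'e) ccat"
    and I :: "'i set" and le :: "'i \<Rightarrow> 'i \<Rightarrow> bool"
    and D :: "'i \<Rightarrow> 'o" and d :: "'i \<Rightarrow> 'i \<Rightarrow> 'm"
  assumes "construction_category K"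
    and "directed_diagram K I le D d"
  shows "(full_diagram K I le D d \<longrightarrow>
            (\<forall>A f. cocone K I le D d A f \<longrightarrow>
               (\<forall>i\<in>I. {x \<in> Uo K (D i). Umor K (f i) x \<in> U0 K A}
                  \<subseteq> (\<Union>j\<in>{j \<in> I. le i j}. {x \<in> Uo K (D i). Umor K (d i j) x \<in> U0 K (D j)}))))
       \<and> (\<forall>A\<in>Ob K. full_obj K A \<longleftrightarrow>
            (\<forall>g\<in>Mor K. Dom K g = A \<longrightarrow> {x \<in> Uo K A. Umor K g x \<in> U0 K (Cod K g)} = U0 K A))
       \<and> (full_diagram K I le D d \<longrightarrow>
            (\<forall>A f. cocone K I le D d A f \<longrightarrow>
               full_for K A (\<Union>i\<in>I. Umor K (f i) ` Uo K (D i)) \<and>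
               (Uo K A = (\<Union>i\<in>I. Umor K (f i) ` Uo K (D i)) \<longrightarrow> full_obj K A)))"
proof (intro conjI)
  note cc = assms(1)
  have dd: "\<And>i j. i \<in> I \<Longrightarrow> j \<in> I \<Longrightarrow> le i j \<Longrightarrow> d i j \<in> Mor K \<and> Dom K (d i j) = D i \<and> Cod K (d i j) = D j"
    using assms(2) unfolding directed_diagram_def by blast
  have key: "\<exists>j\<in>I. le i j \<and> Umor K (d i j) y \<in> U0 K (D j)"
    if fd: "full_diagram K I le D d" and co: "cocone K I le D d A f" and i: "i \<in> I"
      and y: "y \<in> Uo K (D i)" and g: "g \<in> Mor K" "Dom K g = A"
      and gy: "Umor K g (Umor K (f i) y) \<in> U0 K (Cod K g)" for A f i y g
  proof -
    have fi: "\<And>i. i \<in> I \<Longrightarrow> f i \<in> Mor K \<and> Dom K (f i) = D i \<and> Cod K (f i) = A"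
      using co unfolding cocone_def by blast
    have fc: "\<And>i j. i \<in> I \<Longrightarrow> j \<in> I \<Longrightarrow> le i j \<Longrightarrow> Comp K (f j) (d i j) = f i"
      using co unfolding cocone_def by blast
    have "\<forall>j\<in>I. le i j \<longrightarrow> constructible_from K (D j) (Umor K (d i j) y)"
    proof (intro ballI impI)
      fix j assume j: "j \<in> I" "le i j"
      have dj: "d i j \<in> Mor K" "Dom K (d i j) = D i" "Cod K (d i j) = D j" using dd[OF i j] by auto
      have yU: "Umor K (d i j) y \<in> Uo K (D j)" using cc_U[OF cc dj(1)] y dj by simp
      have e: "Umor K (f j) (Umor K (d i j) y) = Umor K (f i) y"
        using cc_comp[OF cc dj(1), of "f j" y] fi[OF j(1)] dj y fc[OF i j] by simp
      have cm: "Comp K g (f j) \<in> Mor K \<and> Dom K (Comp K g (f j)) = D j \<and> Cod K (Comp K g (f j)) = Cod K g"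
        using cc_compM[OF cc, of "f j" g] fi[OF j(1)] g by simp
      have "Umor K (Comp K g (f j)) (Umor K (d i j) y) = Umor K g (Umor K (f j) (Umor K (d i j) y))"
        using cc_comp[OF cc, of "f j" g] fi[OF j(1)] g yU by simp
      then show "constructible_from K (D j) (Umor K (d i j) y)"
        unfolding constructible_from_def using yU cm e gy by (intro conjI bexI[of _ "Comp K g (f j)"]) auto
    qed
    then show ?thesis using fd i y unfolding full_diagram_def constructed_by_def by blast
  qed
  show "full_diagram K I le D d \<longrightarrow>
            (\<forall>A f. cocone K I le D d A f \<longrightarrow>
               (\<forall>i\<in>I. {x \<in> Uo K (D i). Umor K (f i) x \<in> U0 K A}
                  \<subseteq> (\<Union>j\<in>{j \<in> I. le i j}. {x \<in> Uo K (D i). Umor K (d i j) x \<in> U0 K (D j)})))"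
  proof (intro impI allI ballI subsetI)
    fix A f i x assume fd: "full_diagram K I le D d" and co: "cocone K I le D d A f" and i: "i \<in> I"
      and x: "x \<in> {x \<in> Uo K (D i). Umor K (f i) x \<in> U0 K A}"
    have A: "A \<in> Ob K" using co unfolding cocone_def by blast
    have idA: "Id K A \<in> Mor K" "Dom K (Id K A) = A" "Cod K (Id K A) = A"
      using cat_id[OF cc_parts(1)[OF cc] A] by auto
    have fi: "f i \<in> Mor K" "Dom K (f i) = D i" "Cod K (f i) = A"
      using co i unfolding cocone_def by blast+
    have fx: "Umor K (f i) x \<in> Uo K A" using cc_U[OF cc fi(1)] x fi by simp
    have "Umor K (Id K A) (Umor K (f i) x) = Umor K (f i) x"
      using sf_id[OF cc_parts(2)[OF cc] A fx] .
    then obtain j where "j \<in> I" "le i j" "Umor K (d i j) x \<in> U0 K (D j)"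
    proof -
      have "x \<in> Uo K (D i)" "Umor K (Id K A) (Umor K (f i) x) \<in> U0 K (Cod K (Id K A))"
        using x idA(3) \<open>Umor K (Id K A) (Umor K (f i) x) = Umor K (f i) x\<close> by auto
      from key[OF fd co i this(1) idA(1) idA(2) this(2)] show ?thesis using that by blast
    qed
    then show "x \<in> (\<Union>j\<in>{j \<in> I. le i j}. {x \<in> Uo K (D i). Umor K (d i j) x \<in> U0 K (D j)})"
      using x by auto
  qed
  show "\<forall>A\<in>Ob K. full_obj K A \<longleftrightarrow>
            (\<forall>g\<in>Mor K. Dom K g = A \<longrightarrow> {x \<in> Uo K A. Umor K g x \<in> U0 K (Cod K g)} = U0 K A)"
  proof (intro ballI iffI allI impI)
    fix A g assume A: "A \<in> Ob K" and fo: "full_obj K A" and g: "g \<in> Mor K" "Dom K g = A"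
    show "{x \<in> Uo K A. Umor K g x \<in> U0 K (Cod K g)} = U0 K A"
    proof
      show "{x \<in> Uo K A. Umor K g x \<in> U0 K (Cod K g)} \<subseteq> U0 K A"
        using fo g unfolding full_obj_def full_for_def constructible_from_def constructed_by_def by blast
      show "U0 K A \<subseteq> {x \<in> Uo K A. Umor K g x \<in> U0 K (Cod K g)}"
        using cc_U0[OF cc g(1)] cc_U0U[OF cc A] g by auto
    qed
  next
    fix A assume A: "A \<in> Ob K" and h: "\<forall>g\<in>Mor K. Dom K g = A \<longrightarrow> {x \<in> Uo K A. Umor K g x \<in> U0 K (Cod K g)} = U0 K A"
    show "full_obj K A"
      unfolding full_obj_def full_for_def constructible_from_def constructed_by_def
    proof (intro ballI impI)
      fix x assume "x \<in> Uo K A" "x \<in> Uo K A \<and> (\<exists>f\<in>Mor K. Dom K f = A \<and> Umor K f x \<in> U0 K (Cod K f))"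
      then obtain g where "g \<in> Mor K" "Dom K g = A" "Umor K g x \<in> U0 K (Cod K g)" by blast
      with h \<open>x \<in> Uo K A\<close> show "x \<in> U0 K A" by blast
    qed
  qed
  show "full_diagram K I le D d \<longrightarrow>
            (\<forall>A f. cocone K I le D d A f \<longrightarrow>
               full_for K A (\<Union>i\<in>I. Umor K (f i) ` Uo K (D i)) \<and>
               (Uo K A = (\<Union>i\<in>I. Umor K (f i) ` Uo K (D i)) \<longrightarrow> full_obj K A))"
  proof (intro impI allI)
    fix A f assume fd: "full_diagram K I le D d" and co: "cocone K I le D d A f"
    have fi: "\<And>i. i \<in> I \<Longrightarrow> f i \<in> Mor K \<and> Dom K (f i) = D i \<and> Cod K (f i) = A"
      using co unfolding cocone_def by blast
    have fc: "\<And>i j. i \<in> I \<Longrightarrow> j \<in> I \<Longrightarrow> le i j \<Longrightarrow> Comp K (f j) (d i j) = f i"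
      using co unfolding cocone_def by blast
    have ff: "full_for K A (\<Union>i\<in>I. Umor K (f i) ` Uo K (D i))"
      unfolding full_for_def
    proof (intro ballI impI)
      fix x assume "x \<in> (\<Union>i\<in>I. Umor K (f i) ` Uo K (D i))" and cf: "constructible_from K A x"
      then obtain i y where i: "i \<in> I" and y: "y \<in> Uo K (D i)" and xy: "x = Umor K (f i) y" by blast
      obtain g where g: "g \<in> Mor K" "Dom K g = A" "Umor K g x \<in> U0 K (Cod K g)"
        using cf unfolding constructible_from_def by blast
      obtain j where j: "j \<in> I" "le i j" "Umor K (d i j) y \<in> U0 K (D j)"
        using key[OF fd co i y g(1,2)] g(3) xy by auto
      have dj: "d i j \<in> Mor K" "Dom K (d i j) = D i" "Cod K (d i j) = D j" using dd[OF i j(1,2)] by auto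
      have e: "Umor K (f j) (Umor K (d i j) y) = x"
        using cc_comp[OF cc dj(1), of "f j" y] fi[OF j(1)] dj y fc[OF i j(1,2)] xy by simp
      have "Umor K (f j) (Umor K (d i j) y) \<in> U0 K A"
        using cc_U0[OF cc, of "f j"] fi[OF j(1)] j(3) by auto
      then show "constructed_by K A x" using e unfolding constructed_by_def by simp
    qed
    then show "full_for K A (\<Union>i\<in>I. Umor K (f i) ` Uo K (D i)) \<and>
               (Uo K A = (\<Union>i\<in>I. Umor K (f i) ` Uo K (D i)) \<longrightarrow> full_obj K A)"
      unfolding full_obj_def by simp
  qed
qed

end
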